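(* Let $G$ be a group. (i) If $\leq$ is a quasi-total order on $G$, then $\leq$ is admissible and for every dominant $g\in G^{++}$ the growth function $\gamma_g$ is a nonzero homogeneous quasimorphism. (ii) Conversely, for every nonzero homogeneous quasimorphism $f:G\to\mathbb{R}$ there exist a quasi-total order $\leq$ on $G$ and a dominant $g\in G^{++}$ of $(G,\leq)$ such that $f$ is a positive multiple of the growth function $\gamma_g$ of $\leq$.
   Context: A partial order $\leq$ on a group $G$ is bi-invariant if $g\leq h$ implies $gk\leq hk$ and $kg\leq kh$ for all $g,h,k\in G$. Its order semigroup is $G^+=\{g\in G: g\geq e\}$, and its set of dominants is $G^{++}=\{g\in G^+\setminus\{e\}: \forall h\in G\ \exists n\in\mathbb{N}_0,\ g^n\geq h\}$; the order is admissible if $G^{++}\neq\emptyset$. For $g\in G^{++}$ the growth function is $\gamma_g(h)=\lim_{n\to\infty}\frac{1}{n}\inf\{p\in\mathbb{Z}: g^p\geq h^n\}$. A map $f:G\to\mathbb{R}$ is a quasimorphism if $\sup_{h,k}|f(hk)-f(h)-f(k)|<\infty$, and homogeneous if $f(h^n)=nf(h)$ for all $n\in\mathbb{N}$. A half-space filtration of a set $X$ is a family $\{H_n\}_{n\in\mathbb{Z}}$ of subsets with $H_{n+1}\subsetneq H_n$ for all $n$, $\bigcap_n H_n=\emptyset$ and $\bigcup_n H_n=X$. The height of $a\in X$ is $h(a)=\sup\{n\in\mathbb{Z}: a\in H_n\}$, and $h(a,b)=h(a)-h(b)$. A triple $(X,\preceq,\{H_n\})$ is a half-space order if $(X,\preceq)$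 is a poset, $\{H_n\}$ is a half-space filtration of $X$, and there is a constant $w$ with $h(a,b)\geq w\Rightarrow a\succeq b$ for all $a,b\in X$. An action of a group $G$ on $X$ (by bijections, not necessarily order-preserving) is by quasi-automorphisms if there is $d$ with $|h(ga,gb)-h(a,b)|\leq d$ for all $g\in G$, $a,b\in X$; it is unbounded if there exist $g\in G$, $a\in X$ with $h(g^n a)\to\pm\infty$ as $n\to\pm\infty$. Given an effective $G$-action on a poset $(X,\preceq)$, the induced order on $G$ is $g\leq h :\Leftrightarrow \forall k\in G\ \forall x\in X:\ (kg).x\preceq (kh).x$; it is bi-invariant. A quasi-total order on $G$ is an order induced in this way from an effective, unbounded action by quasi-automorphisms of $G$ on some half-space order. *)

theory Defs
  imports "HOL-Analysis.Analysis" "HOL-Algebra.Group_Action"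
begin

text \<open>Groups are HOL-Algebra groups G with carrier G; partial orders on G are
  binary predicates leq, only their restriction to the carrier matters.\<close>

definition order_semigroup :: "'a monoid \<Rightarrow> ('a \<Rightarrow> 'a \<Rightarrow> bool) \<Rightarrow> 'a set" where
  "order_semigroup G leq = {g \<in> carrier G. leq \<one>\<^bsub>G\<^esub> g}"

definition dominants :: "'a monoid \<Rightarrow> ('a \<Rightarrow> 'a \<Rightarrow> bool) \<Rightarrow> 'a set" where
  "dominants G leq = {g \<in> order_semigroup G leq - {\<one>\<^bsub>G\<^esub>}.
      \<forall>h\<in>carrier G. \<exists>n::nat. leq h (g [^]\<^bsub>G\<^esub> n)}"

definition admissible :: "'a monoid \<Rightarrow> ('a \<Rightarrow> 'a \<Rightarrow> bool) \<Rightarrow> bool" where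
  "admissible G leq \<longleftrightarrow> dominants G leq \<noteq> {}"

definition growth_seq :: "'a monoid \<Rightarrow> ('a \<Rightarrow> 'a \<Rightarrow> bool) \<Rightarrow> 'a \<Rightarrow> 'a \<Rightarrow> nat \<Rightarrow> real" where
  "growth_seq G leq g h n =
     real_of_int (Inf {p::int. leq (h [^]\<^bsub>G\<^esub> n) (g [^]\<^bsub>G\<^esub> p)}) / real n"

definition growth :: "'a monoid \<Rightarrow> ('a \<Rightarrow> 'a \<Rightarrow> bool) \<Rightarrow> 'a \<Rightarrow> 'a \<Rightarrow> real" where
  "growth G leq g h = lim (growth_seq G leq g h)"

definition quasimorphism :: "'a monoid \<Rightarrow> ('a \<Rightarrow> real) \<Rightarrow> bool" where
  "quasimorphism G f \<longleftrightarrow>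
     (\<exists>D. \<forall>h\<in>carrier G. \<forall>k\<in>carrier G. \<bar>f (h \<otimes>\<^bsub>G\<^esub> k) - f h - f k\<bar> \<le> D)"

definition homogeneous :: "'a monoid \<Rightarrow> ('a \<Rightarrow> real) \<Rightarrow> bool" where
  "homogeneous G f \<longleftrightarrow> (\<forall>h\<in>carrier G. \<forall>n::nat. f (h [^]\<^bsub>G\<^esub> n) = real n * f h)"

definition half_space_filtration :: "'x set \<Rightarrow> (int \<Rightarrow> 'x set) \<Rightarrow> bool" where
  "half_space_filtration X H \<longleftrightarrow>
     (\<forall>n. H n \<subseteq> X) \<and> (\<forall>n. H (n + 1) \<subset> H n) \<and>
     (\<Inter>n. H n) = {} \<and> (\<Union>n. H n) = X"

definition height :: "(int \<Rightarrow> 'x set) \<Rightarrow> 'x \<Rightarrow> int" where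
  "height H a = Sup {n. a \<in> H n}"

definition poset_on :: "'x set \<Rightarrow> ('x \<Rightarrow> 'x \<Rightarrow> bool) \<Rightarrow> bool" where
  "poset_on X prec \<longleftrightarrow>
     (\<forall>a\<in>X. prec a a) \<and>
     (\<forall>a\<in>X. \<forall>b\<in>X. prec a b \<and> prec b a \<longrightarrow> a = b) \<and>
     (\<forall>a\<in>X. \<forall>b\<in>X. \<forall>c\<in>X. prec a b \<and> prec b c \<longrightarrow> prec a c)"

definition half_space_order :: "'x set \<Rightarrow> ('x \<Rightarrow> 'x \<Rightarrow> bool) \<Rightarrow> (int \<Rightarrow> 'x set) \<Rightarrow> bool" where
  "half_space_order X prec H \<longleftrightarrow>
     poset_on X prec \<and> half_space_filtration X H \<and>
     (\<exists>w::int. \<forall>a\<in>X. \<forall>b\<in>X. height H a - height H b \<ge> w \<longrightarrow> prec b a)"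

definition quasi_automorphic_action ::
  "'a monoid \<Rightarrow> 'x set \<Rightarrow> (int \<Rightarrow> 'x set) \<Rightarrow> ('a \<Rightarrow> 'x \<Rightarrow> 'x) \<Rightarrow> bool" where
  "quasi_automorphic_action G X H \<phi> \<longleftrightarrow>
     (\<exists>d::int. \<forall>g\<in>carrier G. \<forall>a\<in>X. \<forall>b\<in>X.
        \<bar>(height H (\<phi> g a) - height H (\<phi> g b)) - (height H a - height H b)\<bar> \<le> d)"

definition unbounded_action ::
  "'a monoid \<Rightarrow> 'x set \<Rightarrow> (int \<Rightarrow> 'x set) \<Rightarrow> ('a \<Rightarrow> 'x \<Rightarrow> 'x) \<Rightarrow> bool" where
  "unbounded_action G X H \<phi> \<longleftrightarrow>
     (\<exists>g\<in>carrier G. \<exists>a\<in>X.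
        filterlim (\<lambda>n::int. height H (\<phi> (g [^]\<^bsub>G\<^esub> n) a)) at_top at_top \<and>
        filterlim (\<lambda>n::int. height H (\<phi> (g [^]\<^bsub>G\<^esub> n) a)) at_bot at_bot)"

definition induced_order ::
  "'a monoid \<Rightarrow> 'x set \<Rightarrow> ('x \<Rightarrow> 'x \<Rightarrow> bool) \<Rightarrow> ('a \<Rightarrow> 'x \<Rightarrow> 'x) \<Rightarrow> 'a \<Rightarrow> 'a \<Rightarrow> bool" where
  "induced_order G X prec \<phi> g h \<longleftrightarrow>
     (\<forall>k\<in>carrier G. \<forall>x\<in>X. prec (\<phi> (k \<otimes>\<^bsub>G\<^esub> g) x) (\<phi> (k \<otimes>\<^bsub>G\<^esub> h) x))"

text \<open>leq is a quasi-total order on G, witnessed by the data (X, prec, H, phi):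
  an effective (faithful), unbounded action by quasi-automorphisms on a half-space order
  inducing leq on the carrier of G.\<close>

definition quasi_total_via ::
  "'a monoid \<Rightarrow> ('a \<Rightarrow> 'a \<Rightarrow> bool) \<Rightarrow> 'x set \<Rightarrow> ('x \<Rightarrow> 'x \<Rightarrow> bool) \<Rightarrow> (int \<Rightarrow> 'x set)
     \<Rightarrow> ('a \<Rightarrow> 'x \<Rightarrow> 'x) \<Rightarrow> bool" where
  "quasi_total_via G leq X prec H \<phi> \<longleftrightarrow>
     half_space_order X prec H \<and>
     faithful_action G X \<phi> \<and>
     quasi_automorphic_action G X H \<phi> \<and>
     unbounded_action G X H \<phi> \<and>
     (\<forall>g\<in>carrier G. \<forall>h\<in>carrier G. leq g h \<longleftrightarrow> induced_order G X prec \<phi> g h)"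

end

theory Submission
  imports Defs
begin


lemma sandwich_lim:
  fixes P :: "nat \<Rightarrow> int \<Rightarrow> bool" and a b K1 K2 :: real
  assumes a: "a > 0"
    and lo: "\<And>n p. P n p \<Longrightarrow> real n * b - K1 \<le> real_of_int p * a"
    and hi: "\<And>n p. real n * b + K2 \<le> real_of_int p * a \<Longrightarrow> P n p"
  shows "(\<lambda>n. real_of_int (Inf {p. P n p}) / real n) \<longlonglongrightarrow> b / a"
proof -
  define S where "S n = {p. P n p}" for n
  have lower: "real n * b / a - K1 / a \<le> real_of_int (Inf (S n))" for n
  proof -
    have ne: "S n \<noteq> {}"
    proof -
      have "real n * b + K2 \<le> real_of_int \<lceil>(real n * b + K2) / a\<rceil> * a"
        using a by (metis le_of_int_ceiling pos_divide_le_eq)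
      then show ?thesis using hi unfolding S_def by blast
    qed
    have "\<lceil>(real n * b - K1)/a\<rceil> \<le> Inf (S n)"
    proof (rule cInf_greatest[OF ne])
      fix p assume "p \<in> S n"
      then have "real n * b - K1 \<le> real_of_int p * a" using lo unfolding S_def by blast
      then have "(real n * b - K1)/a \<le> real_of_int p" using a by (simp add: pos_divide_le_eq)
      then show "\<lceil>(real n * b - K1)/a\<rceil> \<le> p" by (simp add: ceiling_le_iff)
    qed
    then have "(real n * b - K1)/a \<le> real_of_int (Inf (S n))"
      by (meson le_of_int_ceiling of_int_le_iff order_trans)
    then show ?thesis by (simp add: diff_divide_distrib)
  qed
  have upper: "real_of_int (Inf (S n)) \<le> real n * b / a + (K2 / a + 1)" for n
  proof -
    define p0 where "p0 = \<lceil>(real n * b + K2) / a\<rceil>"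
    have "real n * b + K2 \<le> real_of_int p0 * a"
      using a unfolding p0_def by (metis le_of_int_ceiling pos_divide_le_eq)
    then have p0: "p0 \<in> S n" using hi unfolding S_def by blast
    have bdd: "bdd_below (S n)"
    proof
      fix p assume "p \<in> S n"
      then have "real n * b - K1 \<le> real_of_int p * a" using lo unfolding S_def by blast
      then have "(real n * b - K1)/a \<le> real_of_int p" using a by (simp add: pos_divide_le_eq)
      then show "\<lfloor>(real n * b - K1)/a\<rfloor> \<le> p" by (simp add: floor_le_iff)
    qed
    have "Inf (S n) \<le> p0" by (rule cInf_lower[OF p0 bdd])
    moreover have "real_of_int p0 \<le> (real n * b + K2) / a + 1" unfolding p0_def by linarith
    ultimately show ?thesis by (simp add: add_divide_distrib)
  qed
  have l1: "(\<lambda>n. (real n * b / a - K1 / a) / real n) \<longlonglongrightarrow> b / a"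
  proof -
    have "(\<lambda>n. b / a - (K1 / a) / real n) \<longlonglongrightarrow> b / a - 0"
      by (intro tendsto_intros tendsto_divide_0[OF tendsto_const] filterlim_real_sequentially)
    moreover have "\<forall>\<^sub>F n in sequentially. b / a - (K1 / a) / real n = (real n * b / a - K1 / a) / real n"
      using eventually_gt_at_top[of "0::nat"] by eventually_elim (simp add: field_simps)
    ultimately show ?thesis by (simp add: tendsto_cong)
  qed
  have l2: "(\<lambda>n. (real n * b / a + (K2 / a + 1)) / real n) \<longlonglongrightarrow> b / a"
  proof -
    have "(\<lambda>n. b / a + (K2 / a + 1) / real n) \<longlonglongrightarrow> b / a + 0"
      by (intro tendsto_intros tendsto_divide_0[OF tendsto_const] filterlim_real_sequentially)
    moreover have "\<forall>\<^sub>F n in sequentially. b / a + (K2 / a + 1) / real n = (real n * b / a + (K2 / a + 1)) / real n"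
      using eventually_gt_at_top[of "0::nat"] by eventually_elim (simp add: field_simps)
    ultimately show ?thesis by (simp add: tendsto_cong)
  qed
  show ?thesis
  proof (rule tendsto_sandwich[OF _ _ l1 l2])
    show "\<forall>\<^sub>F n in sequentially. (real n * b / a - K1 / a) / real n \<le> real_of_int (Inf {p. P n p}) / real n"
      using eventually_gt_at_top[of "0::nat"] by eventually_elim
        (use lower in \<open>auto simp: S_def intro!: divide_right_mono\<close>)
    show "\<forall>\<^sub>F n in sequentially. real_of_int (Inf {p. P n p}) / real n \<le> (real n * b / a + (K2 / a + 1)) / real n"
      using eventually_gt_at_top[of "0::nat"] by eventually_elim
        (use upper in \<open>auto simp: S_def intro!: divide_right_mono\<close>)
  qed
qed

lemma quasi_add_seq:
  fixes u :: "nat \<Rightarrow> real"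
  assumes q: "\<And>m n. \<bar>u (m + n) - u m - u n\<bar> \<le> D"
  shows "\<exists>L. \<forall>n. \<bar>u n - real n * L\<bar> \<le> D"
proof -
  have D0: "D \<ge> 0" using q[of 0 0] by simp
  have mult0: "\<bar>u (Suc m * n) - real (Suc m) * u n\<bar> \<le> real m * D" for m n
  proof (induction m)
    case 0 then show ?case by simp
  next
    case (Suc m)
    have "\<bar>u (n + Suc m * n) - u n - u (Suc m*n)\<bar> \<le> D" by (rule q)
    moreover have "Suc (Suc m) * n = n + Suc m * n" by simp
    moreover have "real (Suc (Suc m)) * u n = u n + real (Suc m) * u n" by (simp add: algebra_simps)
    moreover have "real (Suc m) * D = D + real m * D" by (simp add: algebra_simps)
    ultimately show ?case using Suc.IH by (smt (verit))
  qed
  have mult: "\<bar>u (m * n) - real m * u n\<bar> \<le> real m * D" if m0: "m > 0" for m n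
  proof -
    obtain k where k: "m = Suc k" using m0 gr0_implies_Suc by blast
    have "real k * D \<le> real (Suc k) * D" using D0 by (intro mult_right_mono) auto
    then show ?thesis using mult0[of k n] unfolding k by linarith
  qed
  have key: "\<bar>u n / real n - u m / real m\<bar> \<le> D / real n + D / real m"
    if "n > 0" "m > 0" for n m
  proof -
    have A: "\<bar>u (m * n) - real m * u n\<bar> \<le> real m * D" by (rule mult) (use that in auto)
    have B: "\<bar>u (n * m) - real n * u m\<bar> \<le> real n * D" by (rule mult) (use that in auto)
    have "\<bar>real m * u n - real n * u m\<bar> \<le> real m * D + real n * D"
      using A B by (simp add: mult.commute)
    then have "\<bar>(real m * u n - real n * u m) / (real n * real m)\<bar> \<le> (real m * D + real n * D) / (real n * real m)"
      using that by (simp add: abs_divide divide_right_mono)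
    moreover have "(real m * u n - real n * u m) / (real n * real m) = u n / real n - u m / real m"
      using that by (simp add: field_simps)
    moreover have "(real m * D + real n * D) / (real n * real m) = D / real n + D / real m"
      using that by (simp add: field_simps)
    ultimately show ?thesis by simp
  qed
  define v where "v n = u n / real n" for n
  have "Cauchy v"
  proof (rule metric_CauchyI)
    fix e :: real assume e: "e > 0"
    obtain M :: nat where M: "M > 0" "2 * D / real M < e"
    proof -
      obtain M where "2 * D / e < real M" using reals_Archimedean2 by blast
      then have "2 * D < e * real (Suc M)" using e by (simp add: field_simps) 
      then have "2 * D / real (Suc M) < e" by (simp add: field_simps)
      then show ?thesis using that[of "Suc M"] by simp
    qed
    show "\<exists>M. \<forall>m\<ge>M. \<forall>n\<ge>M. dist (v m) (v n) < e"
    proof (intro exI allI impI)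
      fix m n assume mn: "M \<le> m" "M \<le> n"
      have "dist (v m) (v n) \<le> D / real m + D / real n"
        using key[of m n] mn M by (simp add: v_def dist_real_def)
      also have "\<dots> \<le> D / real M + D / real M"
        using mn M D0 by (intro add_mono divide_left_mono) auto
      also have "\<dots> < e" using M by simp
      finally show "dist (v m) (v n) < e" .
    qed
  qed
  then obtain L where L: "v \<longlonglongrightarrow> L" using Cauchy_convergent_iff convergent_def by blast
  have "\<bar>u n - real n * L\<bar> \<le> D" for n
  proof (cases "n = 0")
    case True then show ?thesis using q[of 0 0] by simp
  next
    case False
    have lim: "(\<lambda>m. \<bar>v n - v m\<bar>) \<longlonglongrightarrow> \<bar>v n - L\<bar>"
      by (intro tendsto_intros L)
    have ev: "\<forall>\<^sub>F m in sequentially. \<bar>v n - v m\<bar> \<le> D / real n + D / real m"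
      using eventually_gt_at_top[of "0::nat"] by eventually_elim (use key False in \<open>auto simp: v_def\<close>)
    have lim2: "(\<lambda>m. D / real n + D / real m) \<longlonglongrightarrow> D / real n + 0"
      by (intro tendsto_intros tendsto_divide_0[OF tendsto_const] filterlim_real_sequentially)
    have "\<bar>v n - L\<bar> \<le> D / real n + 0"
      by (rule tendsto_le[OF _ lim2 lim ev]) simp
    then have "\<bar>u n / real n - L\<bar> \<le> D / real n" by (simp add: v_def)
    then have "\<bar>(u n - real n * L) / real n\<bar> \<le> D / real n" using False by (simp add: field_simps)
    then show ?thesis using False by (simp add: abs_divide divide_le_cancel)
  qed
  then show ?thesis by blast
qed

lemma lin_bound_unique:
  fixes u :: "nat \<Rightarrow> real"
  assumes "\<And>n. \<bar>u n - real n * L\<bar> \<le> D" "\<And>n. \<bar>u n - real n * L'\<bar> \<le> D'"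
  shows "L = L'"
proof (rule ccontr)
  assume ne: "L \<noteq> L'"
  then have pos: "\<bar>L - L'\<bar> > 0" by simp
  obtain n :: nat where n: "(D + D') / \<bar>L - L'\<bar> < real n" using reals_Archimedean2 by blast
  then have "D + D' < real n * \<bar>L - L'\<bar>" using pos by (simp add: field_simps)
  moreover have "real n * \<bar>L - L'\<bar> \<le> D + D'"
  proof -
    have "\<bar>real n * L - real n * L'\<bar> \<le> D + D'" using assms[of n] by linarith
    then show ?thesis by (simp add: abs_mult flip: right_diff_distrib)
  qed
  ultimately show False by simp
qed



lemma part1:
  fixes G :: "'a monoid" (structure) and leq :: "'a \<Rightarrow> 'a \<Rightarrow> bool" and X :: "'x set"
  assumes grp: "group G" and qt: "quasi_total_via G leq X prec H \<phi>"
  shows "admissible G leq \<and>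
          (\<forall>g\<in>dominants G leq.
             (\<forall>h\<in>carrier G. convergent (growth_seq G leq g h)) \<and>
             quasimorphism G (growth G leq g) \<and>
             homogeneous G (growth G leq g) \<and>
             (\<exists>h\<in>carrier G. growth G leq g h \<noteq> 0))"
proof -
  interpret group G by (rule grp)
  have hso: "half_space_order X prec H" and fa: "faithful_action G X \<phi>"
    and qa: "quasi_automorphic_action G X H \<phi>" and ub: "unbounded_action G X H \<phi>"
    and ind: "\<And>g h. g \<in> carrier G \<Longrightarrow> h \<in> carrier G \<Longrightarrow> leq g h \<longleftrightarrow> induced_order G X prec \<phi> g h"
    using qt unfolding quasi_total_via_def by simp_all
  interpret faithful_action G X \<phi> by (rule fa)
  obtain w0 :: int where w0: "\<And>a b. a \<in> X \<Longrightarrow> b \<in> X \<Longrightarrow> height H a - height H b \<ge> w0 \<Longrightarrow> prec b a"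
    using hso unfolding half_space_order_def by blast
  have antis: "\<And>a b. a \<in> X \<Longrightarrow> b \<in> X \<Longrightarrow> prec a b \<Longrightarrow> prec b a \<Longrightarrow> a = b"
    using hso unfolding half_space_order_def poset_on_def by blast
  obtain di :: int where di: "\<And>g a b. g \<in> carrier G \<Longrightarrow> a \<in> X \<Longrightarrow> b \<in> X \<Longrightarrow>
      \<bar>(height H (\<phi> g a) - height H (\<phi> g b)) - (height H a - height H b)\<bar> \<le> di"
    using qa unfolding quasi_automorphic_action_def by blast
  obtain g0 a0 where g0: "g0 \<in> carrier G" and a0: "a0 \<in> X"
    and lim0: "filterlim (\<lambda>n::int. height H (\<phi> (g0 [^] n) a0)) at_top at_top"
    using ub unfolding unbounded_action_def by blast
  define ht where "ht x = real_of_int (height H x)" for x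
  define d where "d = real_of_int di"
  define w where "w = real_of_int \<bar>w0\<bar>"
  have w_ge: "w \<ge> 0" unfolding w_def by simp
  have dq: "\<And>g a b. g \<in> carrier G \<Longrightarrow> a \<in> X \<Longrightarrow> b \<in> X \<Longrightarrow>
      \<bar>(ht (\<phi> g a) - ht (\<phi> g b)) - (ht a - ht b)\<bar> \<le> d"
  proof -
    fix g a b assume "g \<in> carrier G" "a \<in> X" "b \<in> X"
    from di[OF this] show "\<bar>(ht (\<phi> g a) - ht (\<phi> g b)) - (ht a - ht b)\<bar> \<le> d"
      unfolding ht_def d_def by (metis of_int_abs of_int_diff of_int_le_iff)
  qed
  have d0: "d \<ge> 0" using dq[OF one_closed a0 a0] by simp
  have inX: "\<And>g x. g \<in> carrier G \<Longrightarrow> x \<in> X \<Longrightarrow> \<phi> g x \<in> X"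
    using element_image by blast
  have phi1: "\<And>x. x \<in> X \<Longrightarrow> \<phi> \<one> x = x"
    using id_eq_one by (metis restrict_apply')
  define \<tau> where "\<tau> x = ht (\<phi> x a0) - ht a0" for x
  have tau1: "\<tau> \<one> = 0" unfolding \<tau>_def using phi1[OF a0] by simp
  have Q: "\<bar>\<tau> (x \<otimes> y) - \<tau> x - \<tau> y\<bar> \<le> d" if "x \<in> carrier G" "y \<in> carrier G" for x y
  proof -
    have "\<bar>(ht (\<phi> x (\<phi> y a0)) - ht (\<phi> x a0)) - (ht (\<phi> y a0) - ht a0)\<bar> \<le> d"
      using dq[OF that(1) inX[OF that(2) a0] a0] .
    moreover have "\<phi> (x \<otimes> y) a0 = \<phi> x (\<phi> y a0)" using composition_rule a0 that by blast
    ultimately show ?thesis unfolding \<tau>_def by simp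
  qed
  have Qx: "\<bar>ht (\<phi> g x) - ht x - \<tau> g\<bar> \<le> d" if "g \<in> carrier G" "x \<in> X" for g x
    using dq[OF that a0] unfolding \<tau>_def by simp
  have ORD1: "leq g h" if g: "g \<in> carrier G" and h: "h \<in> carrier G" and le: "\<tau> h - \<tau> g \<ge> w + 3 * d" for g h
  proof -
    have "induced_order G X prec \<phi> g h"
      unfolding induced_order_def
    proof (intro ballI)
      fix k x assume k: "k \<in> carrier G" and x: "x \<in> X"
      have e1: "\<phi> (k \<otimes> g) x = \<phi> k (\<phi> g x)" using composition_rule x k g by blast
      have e2: "\<phi> (k \<otimes> h) x = \<phi> k (\<phi> h x)" using composition_rule x k h by blast
      have A: "\<bar>(ht (\<phi> k (\<phi> h x)) - ht (\<phi> k (\<phi> g x))) - (ht (\<phi> h x) - ht (\<phi> g x))\<bar> \<le> d"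
        using dq[OF k inX[OF h x] inX[OF g x]] .
      have B: "\<bar>ht (\<phi> h x) - ht x - \<tau> h\<bar> \<le> d" using Qx[OF h x] .
      have C: "\<bar>ht (\<phi> g x) - ht x - \<tau> g\<bar> \<le> d" using Qx[OF g x] .
      have "ht (\<phi> k (\<phi> h x)) - ht (\<phi> k (\<phi> g x)) \<ge> w"
        using A B C le by linarith
      moreover have "real_of_int w0 \<le> w" unfolding w_def by simp
      ultimately have "real_of_int (height H (\<phi> k (\<phi> h x)) - height H (\<phi> k (\<phi> g x))) \<ge> real_of_int w0"
        unfolding ht_def by simp
      then have "height H (\<phi> k (\<phi> h x)) - height H (\<phi> k (\<phi> g x)) \<ge> w0"
        by (simp only: of_int_le_iff)
      then have "prec (\<phi> k (\<phi> g x)) (\<phi> k (\<phi> h x))"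
        by (rule w0[OF inX[OF k inX[OF h x]] inX[OF k inX[OF g x]]])
      then show "prec (\<phi> (k \<otimes> g) x) (\<phi> (k \<otimes> h) x)"
        unfolding e1 e2 .
    qed
    then show ?thesis using ind g h by blast
  qed
  have ORD2: "\<tau> h - \<tau> g \<ge> - w" if g: "g \<in> carrier G" and h: "h \<in> carrier G" and le: "leq g h" for g h
  proof -
    have "induced_order G X prec \<phi> g h" using ind g h le by blast
    then have "prec (\<phi> (\<one> \<otimes> g) a0) (\<phi> (\<one> \<otimes> h) a0)"
      unfolding induced_order_def using a0 by blast
    then have P: "prec (\<phi> g a0) (\<phi> h a0)" using g h by simp
    show ?thesis
    proof (rule ccontr)
      assume "\<not> ?thesis"
      then have "ht (\<phi> g a0) - ht (\<phi> h a0) > w" unfolding \<tau>_def by simp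
      moreover have "real_of_int w0 \<le> w" unfolding w_def by simp
      ultimately have "real_of_int (height H (\<phi> g a0) - height H (\<phi> h a0)) \<ge> real_of_int w0"
        unfolding ht_def by simp
      then have "height H (\<phi> g a0) - height H (\<phi> h a0) \<ge> w0" by (simp only: of_int_le_iff)
      then have "prec (\<phi> h a0) (\<phi> g a0)" by (rule w0[OF inX[OF g a0] inX[OF h a0]])
      then have "\<phi> g a0 = \<phi> h a0" by (rule antis[OF inX[OF g a0] inX[OF h a0] P])
      then show False using \<open>ht (\<phi> g a0) - ht (\<phi> h a0) > w\<close> w_ge by simp
    qed
  qed
  have Qinv: "\<bar>\<tau> (inv x) + \<tau> x\<bar> \<le> d" if "x \<in> carrier G" for x
    using Q[OF inv_closed[OF that] that] that tau1 by simp
  define T where "T x = (SOME L. \<forall>n::nat. \<bar>\<tau> (x [^] n) - real n * L\<bar> \<le> d)" for x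
  have TB: "\<bar>\<tau> (x [^] n) - real n * T x\<bar> \<le> d" if x: "x \<in> carrier G" for x and n :: nat
  proof -
    have "\<exists>L. \<forall>n::nat. \<bar>\<tau> (x [^] n) - real n * L\<bar> \<le> d"
    proof (rule quasi_add_seq)
      fix m n :: nat
      show "\<bar>\<tau> (x [^] (m + n)) - \<tau> (x [^] m) - \<tau> (x [^] n)\<bar> \<le> d"
        using Q[of "x [^] m" "x [^] n"] x by (simp add: nat_pow_mult)
    qed
    then have "\<forall>n::nat. \<bar>\<tau> (x [^] n) - real n * T x\<bar> \<le> d"
      unfolding T_def by (rule someI_ex)
    then show ?thesis by blast
  qed
  have TBint: "\<bar>\<tau> (x [^] p) - real_of_int p * T x\<bar> \<le> 2 * d" if x: "x \<in> carrier G" for x and p :: int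
  proof (cases "p \<ge> 0")
    case True
    then obtain n :: nat where n: "p = int n" by (metis nonneg_eq_int)
    show ?thesis using TB[OF x, of n] d0 unfolding n int_pow_int by simp
  next
    case False
    define n where "n = nat (- p)"
    have n: "p = - int n" using False unfolding n_def by simp
    have "x [^] p = inv (x [^] n)" unfolding n using x by (simp add: int_pow_neg_int)
    moreover have "\<bar>\<tau> (inv (x [^] n)) + \<tau> (x [^] n)\<bar> \<le> d" using Qinv x by simp
    ultimately show ?thesis using TB[OF x, of n] unfolding n by simp
  qed
  have Thom: "T (x [^] k) = real k * T x" if x: "x \<in> carrier G" for x and k :: nat
  proof (rule lin_bound_unique)
    fix n :: nat
    show "\<bar>\<tau> ((x [^] k) [^] n) - real n * T (x [^] k)\<bar> \<le> d" using TB x by simp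
    show "\<bar>\<tau> ((x [^] k) [^] n) - real n * (real k * T x)\<bar> \<le> d"
      using TB[OF x, of "k * n"] x by (simp add: nat_pow_pow mult.left_commute)
  qed
  have T\<tau>: "\<bar>T x - \<tau> x\<bar> \<le> d" if "x \<in> carrier G" for x
    using TB[OF that, of 1] that by simp
  have Tq: "\<bar>T (x \<otimes> y) - T x - T y\<bar> \<le> 4 * d" if "x \<in> carrier G" "y \<in> carrier G" for x y
    using T\<tau>[OF that(1)] T\<tau>[OF that(2)] T\<tau>[of "x \<otimes> y"] Q[OF that] that by simp
  have big: "\<exists>n::nat. \<tau> (g0 [^] n) \<ge> M" for M
  proof -
    from lim0 have "\<forall>\<^sub>F n in at_top. height H (\<phi> (g0 [^] (n::int)) a0) \<ge> \<lceil>M + ht a0\<rceil>"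
      unfolding filterlim_at_top by blast
    then obtain N :: int where N: "\<And>n. n \<ge> N \<Longrightarrow> height H (\<phi> (g0 [^] n) a0) \<ge> \<lceil>M + ht a0\<rceil>"
      by (auto simp: eventually_at_top_linorder)
    define n where "n = nat (max N 0)"
    have "height H (\<phi> (g0 [^] (int n)) a0) \<ge> \<lceil>M + ht a0\<rceil>" using N unfolding n_def by simp
    then have "ht (\<phi> (g0 [^] n) a0) \<ge> M + ht a0" unfolding int_pow_int ht_def
      by (meson ceiling_le_iff of_int_le_iff order_trans le_of_int_ceiling)
    then show ?thesis unfolding \<tau>_def by (intro exI[of _ n]) simp
  qed
  have Tg0: "T g0 > 0"
  proof (rule ccontr)
    assume "\<not> T g0 > 0"
    obtain n :: nat where "\<tau> (g0 [^] n) \<ge> d + 1" using big by blast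
    moreover have "\<tau> (g0 [^] n) \<le> real n * T g0 + d" using TB[OF g0, of n] by linarith
    moreover have "real n * T g0 \<le> 0" using \<open>\<not> T g0 > 0\<close> by (simp add: mult_nonneg_nonpos)
    ultimately show False by linarith
  qed
  have domprops: "g \<in> carrier G \<and> leq \<one> g \<and> g \<noteq> \<one> \<and> (\<forall>h\<in>carrier G. \<exists>n::nat. leq h (g [^] n))"
    if "g \<in> dominants G leq" for g
    using that unfolding dominants_def order_semigroup_def by auto
  have adm: "admissible G leq"
  proof -
    obtain N :: nat where N: "w + 4 * d + 1 < real N * T g0"
      using reals_Archimedean3[OF Tg0] by blast
    define g where "g = g0 [^] N"
    have g: "g \<in> carrier G" unfolding g_def using g0 by simp
    have Tg: "T g = real N * T g0" unfolding g_def using Thom g0 by simp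
    have Tgpos: "T g > 0" using Tg N w_ge d0 by linarith
    have tg: "\<tau> g \<ge> w + 3 * d + 1" using T\<tau>[OF g] Tg N by linarith
    have "leq \<one> g" using ORD1[OF one_closed g] tg tau1 by simp
    moreover have "g \<noteq> \<one>" using tg tau1 w_ge d0 by auto
    moreover have "\<exists>n::nat. leq h (g [^] n)" if h: "h \<in> carrier G" for h
    proof -
      obtain n :: nat where n: "\<tau> h + w + 4 * d < real n * T g"
        using reals_Archimedean3[OF Tgpos] by blast
      have "\<tau> (g [^] n) \<ge> real n * T g - d" using TB[OF g, of n] by linarith
      then have "leq h (g [^] n)" using n by (intro ORD1[OF h nat_pow_closed[OF g, of n]]) linarith
      then show ?thesis by blast
    qed
    ultimately have "g \<in> dominants G leq"
      unfolding dominants_def order_semigroup_def using g by auto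
    then show ?thesis unfolding admissible_def by blast
  qed
  have main: "(\<forall>h\<in>carrier G. convergent (growth_seq G leq g h)) \<and>
             quasimorphism G (growth G leq g) \<and>
             homogeneous G (growth G leq g) \<and>
             (\<exists>h\<in>carrier G. growth G leq g h \<noteq> 0)" if gd: "g \<in> dominants G leq" for g
  proof -
    have g: "g \<in> carrier G" and gdom: "\<And>h. h \<in> carrier G \<Longrightarrow> \<exists>n::nat. leq h (g [^] n)"
      using domprops[OF gd] by auto
    have Tg: "T g > 0"
    proof (rule ccontr)
      assume "\<not> T g > 0"
      obtain m :: nat where m: "\<tau> (g0 [^] m) \<ge> d + w + 1" using big by blast
      obtain n :: nat where n: "leq (g0 [^] m) (g [^] n)" using gdom[of "g0 [^] m"] g0 by auto
      have "\<tau> (g [^] n) - \<tau> (g0 [^] m) \<ge> - w" using ORD2[OF _ _ n] g g0 by simp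
      moreover have "\<tau> (g [^] n) \<le> real n * T g + d" using TB[OF g, of n] by linarith
      moreover have "real n * T g \<le> 0" using \<open>\<not> T g > 0\<close> by (simp add: mult_nonneg_nonpos)
      ultimately show False using m by linarith
    qed
    have lim: "growth_seq G leq g h \<longlonglongrightarrow> T h / T g" if h: "h \<in> carrier G" for h
      unfolding growth_seq_def
    proof (rule sandwich_lim[of "T g" _ "T h" "w + 3 * d" "w + 6 * d"])
      show "T g > 0" by (rule Tg)
      fix n :: nat and p :: int
      {
        assume "leq (h [^] n) (g [^] p)"
        then have "\<tau> (g [^] p) - \<tau> (h [^] n) \<ge> - w" using ORD2 g h by simp
        moreover have "\<bar>\<tau> (g [^] p) - real_of_int p * T g\<bar> \<le> 2 * d" by (rule TBint[OF g])
        moreover have "\<bar>\<tau> (h [^] n) - real n * T h\<bar> \<le> d" by (rule TB[OF h])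
        ultimately show "real n * T h - (w + 3 * d) \<le> real_of_int p * T g" by linarith
      }
      {
        assume a: "real n * T h + (w + 6 * d) \<le> real_of_int p * T g"
        have "\<bar>\<tau> (g [^] p) - real_of_int p * T g\<bar> \<le> 2 * d" by (rule TBint[OF g])
        moreover have "\<bar>\<tau> (h [^] n) - real n * T h\<bar> \<le> d" by (rule TB[OF h])
        ultimately have "\<tau> (g [^] p) - \<tau> (h [^] n) \<ge> w + 3 * d" using a by linarith
        then show "leq (h [^] n) (g [^] p)" using ORD1 g h by simp
      }
    qed
    have gr: "growth G leq g h = T h / T g" if h: "h \<in> carrier G" for h
      unfolding growth_def using lim[OF h] by (rule limI)
    have c1: "\<forall>h\<in>carrier G. convergent (growth_seq G leq g h)"
      using lim convergent_def by blast
    have c2: "quasimorphism G (growth G leq g)"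
      unfolding quasimorphism_def
    proof (intro exI ballI)
      fix x y assume x: "x \<in> carrier G" and y: "y \<in> carrier G"
      have "growth G leq g (x \<otimes> y) - growth G leq g x - growth G leq g y = (T (x \<otimes> y) - T x - T y) / T g"
        using gr x y by (simp add: diff_divide_distrib)
      then show "\<bar>growth G leq g (x \<otimes> y) - growth G leq g x - growth G leq g y\<bar> \<le> 4 * d / T g"
        using Tq[OF x y] Tg by (simp add: abs_divide divide_right_mono)
    qed
    have c3: "homogeneous G (growth G leq g)"
      unfolding homogeneous_def using gr Thom by simp
    have c4: "\<exists>h\<in>carrier G. growth G leq g h \<noteq> 0"
      using gr[OF g] Tg g by (intro bexI[of _ g]) auto
    show ?thesis using c1 c2 c3 c4 by blast
  qed
  show ?thesis using adm main by blast
qed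



lemma part2:
  fixes G :: "'a monoid" (structure) and f :: "'a \<Rightarrow> real"
  assumes grp: "group G" and qm: "quasimorphism G f" and hom: "homogeneous G f"
    and nz: "\<exists>h\<in>carrier G. f h \<noteq> 0"
  shows "\<exists>(leq :: 'a \<Rightarrow> 'a \<Rightarrow> bool) (X :: 'a set set) prec H \<phi> g c.
              quasi_total_via G leq X prec H \<phi> \<and>
              g \<in> dominants G leq \<and> c > (0::real) \<and>
              (\<forall>h\<in>carrier G. f h = c * growth G leq g h)"
proof -
  interpret group G by (rule grp)
  obtain D where D: "\<And>h k. h \<in> carrier G \<Longrightarrow> k \<in> carrier G \<Longrightarrow> \<bar>f (h \<otimes> k) - f h - f k\<bar> \<le> D"
    using qm unfolding quasimorphism_def by blast
  have hm: "\<And>h n. h \<in> carrier G \<Longrightarrow> f (h [^] (n::nat)) = real n * f h"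
    using hom unfolding homogeneous_def by blast
  have D0: "D \<ge> 0" using D[OF one_closed one_closed] by simp
  have f1: "f \<one> = 0"
  proof -
    have "f (\<one> [^] (2::nat)) = 2 * f \<one>" using hm[OF one_closed, of 2] by simp
    then show ?thesis by simp
  qed
  have finv: "f (inv x) = - f x" if x: "x \<in> carrier G" for x
  proof (rule lin_bound_unique[where u = "\<lambda>n. real n * f (inv x)" and D = 0 and D' = D])
    fix n :: nat
    show "\<bar>real n * f (inv x) - real n * f (inv x)\<bar> \<le> 0" by simp
    have "\<bar>f (inv x [^] n \<otimes> x [^] n) - f (inv x [^] n) - f (x [^] n)\<bar> \<le> D"
      using D x by simp
    moreover have "inv x [^] n \<otimes> x [^] n = \<one>" using x by (simp add: nat_pow_inv)
    ultimately have "\<bar>0 - real n * f (inv x) - real n * f x\<bar> \<le> D"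
      using hm x f1 by simp
    then show "\<bar>real n * f (inv x) - real n * - f x\<bar> \<le> D" by simp
  qed
  have fint: "f (x [^] p) = real_of_int p * f x" if x: "x \<in> carrier G" for x and p :: int
  proof (cases "p \<ge> 0")
    case True
    then obtain n :: nat where n: "p = int n" by (metis nonneg_eq_int)
    show ?thesis unfolding n int_pow_int using hm x by simp
  next
    case False
    define n where "n = nat (- p)"
    have n: "p = - int n" using False unfolding n_def by simp
    have "x [^] p = inv (x [^] n)" unfolding n using x by (simp add: int_pow_neg_int)
    then show ?thesis using finv hm x unfolding n by simp
  qed
  obtain h0 where h0: "h0 \<in> carrier G" "f h0 \<noteq> 0" using nz by blast
  define x0 where "x0 = (if f h0 > 0 then h0 else inv h0)"
  have x0: "x0 \<in> carrier G" unfolding x0_def using h0 by simp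
  define s where "s = f x0"
  have s: "s > 0" unfolding s_def x0_def using h0 finv by auto
  define X where "X = (\<lambda>a. {a}) ` carrier G"
  define \<phi> where "\<phi> g = (\<lambda>S\<in>X. {g \<otimes> the_elem S})" for g
  define F where "F S = f (the_elem S)" for S
  define prec where "prec S T \<longleftrightarrow> S = T \<or> F T - F S \<ge> s" for S T
  define H where "H n = {S \<in> X. real_of_int n * s \<le> F S}" for n :: int
  define leq where "leq = induced_order G X prec \<phi>"
  have phi_s: "\<phi> g {a} = {g \<otimes> a}" if "a \<in> carrier G" for g a
    using that unfolding \<phi>_def X_def by simp
  have F_s: "F {a} = f a" for a unfolding F_def by simp
  have X_iff: "S \<in> X \<longleftrightarrow> (\<exists>a\<in>carrier G. S = {a})" for S unfolding X_def by auto
  have bij: "\<phi> g \<in> Bij X" if g: "g \<in> carrier G" for g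
  proof -
    have "bij_betw (\<phi> g) X X"
    proof (rule bij_betw_byWitness[where f' = "\<phi> (inv g)"])
      show "\<forall>a\<in>X. \<phi> (inv g) (\<phi> g a) = a" using g by (auto simp: X_iff phi_s m_assoc[symmetric])
      show "\<forall>a\<in>X. \<phi> g (\<phi> (inv g) a) = a" using g by (auto simp: X_iff phi_s m_assoc[symmetric])
      show "\<phi> g ` X \<subseteq> X" using g by (auto simp: X_iff phi_s)
      show "\<phi> (inv g) ` X \<subseteq> X" using g by (auto simp: X_iff phi_s)
    qed
    moreover have "\<phi> g \<in> extensional X" unfolding \<phi>_def by simp
    ultimately show ?thesis unfolding Bij_def by simp
  qed
  have ga: "group_action G X \<phi>"
    unfolding group_action_def group_hom_def group_hom_axioms_def
  proof (intro conjI)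
    show "group G" by (rule grp)
    show "group (BijGroup X)" by (rule group_BijGroup)
    show "\<phi> \<in> hom G (BijGroup X)"
      unfolding hom_def
    proof (intro CollectI conjI ballI)
      show "\<phi> \<in> carrier G \<rightarrow> carrier (BijGroup X)" using bij unfolding BijGroup_def by simp
      fix x y assume x: "x \<in> carrier G" and y: "y \<in> carrier G"
      have "\<phi> (x \<otimes> y) = compose X (\<phi> x) (\<phi> y)"
      proof (rule ext)
        fix S
        show "\<phi> (x \<otimes> y) S = compose X (\<phi> x) (\<phi> y) S"
        proof (cases "S \<in> X")
          case True
          then obtain a where a: "a \<in> carrier G" "S = {a}" by (auto simp: X_iff)
          then show ?thesis using x y True by (simp add: compose_def phi_s m_assoc)
        next
          case False
          then show ?thesis unfolding \<phi>_def compose_def by simp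
        qed
      qed
      then show "\<phi> (x \<otimes> y) = \<phi> x \<otimes>\<^bsub>BijGroup X\<^esub> \<phi> y"
        using bij x y unfolding BijGroup_def by simp
    qed
  qed
  have fa: "faithful_action G X \<phi>"
    unfolding faithful_action_def faithful_action_axioms_def
  proof (intro conjI ga inj_onI)
    fix g h assume g: "g \<in> carrier G" and h: "h \<in> carrier G" and e: "\<phi> g = \<phi> h"
    have "\<phi> g {\<one>} = \<phi> h {\<one>}" using e by simp
    then show "g = h" using g h by (simp add: phi_s)
  qed
  have height_eq: "height H S = \<lfloor>F S / s\<rfloor>" if S: "S \<in> X" for S
  proof -
    have "{n. S \<in> H n} = {..\<lfloor>F S / s\<rfloor>}"
      using S s by (auto simp: H_def le_floor_iff pos_le_divide_eq)
    then show ?thesis unfolding height_def by simp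
  qed
  have poset: "poset_on X prec"
    unfolding poset_on_def prec_def using s by auto
  have strict: "H (n + 1) \<subset> H n" for n
  proof
    show "H (n + 1) \<subseteq> H n" unfolding H_def using s by (auto simp: algebra_simps)
    have xin: "{x0 [^] n} \<in> X" using x0 unfolding X_def by simp
    have "F {x0 [^] n} = real_of_int n * s" unfolding F_s s_def using fint x0 by simp
    then have "{x0 [^] n} \<in> H n" "{x0 [^] n} \<notin> H (n + 1)"
      unfolding H_def using xin s by (auto simp: algebra_simps)
    then show "H (n + 1) \<noteq> H n" by blast
  qed
  have inter: "(\<Inter>n. H n) = {}"
  proof (rule ccontr)
    assume "(\<Inter>n. H n) \<noteq> {}"
    then obtain S where "\<forall>n. S \<in> H n" by blast
    then have "real_of_int (\<lceil>F S / s\<rceil> + 1) * s \<le> F S" unfolding H_def by blast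
    moreover have "F S \<le> real_of_int \<lceil>F S / s\<rceil> * s"
      using le_of_int_ceiling[of "F S / s"] pos_divide_le_eq[OF s] by blast
    ultimately show False using s by (simp add: algebra_simps)
  qed
  have union: "(\<Union>n. H n) = X"
  proof
    show "(\<Union>n. H n) \<subseteq> X" unfolding H_def by auto
    show "X \<subseteq> (\<Union>n. H n)"
    proof
      fix S assume S: "S \<in> X"
      have "real_of_int \<lfloor>F S / s\<rfloor> * s \<le> F S"
        using of_int_floor_le[of "F S / s"] pos_le_divide_eq[OF s] by blast
      then show "S \<in> (\<Union>n. H n)" unfolding H_def using S by blast
    qed
  qed
  have filt: "half_space_filtration X H"
    unfolding half_space_filtration_def using strict inter union by (auto simp: H_def)
  have hs: "\<exists>w::int. \<forall>a\<in>X. \<forall>b\<in>X. height H a - height H b \<ge> w \<longrightarrow> prec b a"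
  proof (intro exI[of _ 2] ballI impI)
    fix a b assume a: "a \<in> X" and b: "b \<in> X" and le: "height H a - height H b \<ge> 2"
    have "\<lfloor>F a / s\<rfloor> - \<lfloor>F b / s\<rfloor> \<ge> 2" using le height_eq a b by simp
    then have "real_of_int \<lfloor>F a / s\<rfloor> - real_of_int \<lfloor>F b / s\<rfloor> \<ge> 2" by linarith
    moreover have "real_of_int \<lfloor>F a / s\<rfloor> \<le> F a / s" by (rule of_int_floor_le)
    moreover have "F b / s < real_of_int \<lfloor>F b / s\<rfloor> + 1" by (rule real_of_int_floor_add_one_gt)
    ultimately have "F a / s - F b / s > 1" by linarith
    then have "(F a - F b) / s > 1" by (simp add: diff_divide_distrib)
    then have "F a - F b > s" using s by (simp add: less_divide_eq)
    then show "prec b a" unfolding prec_def by simp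
  qed
  have hso: "half_space_order X prec H"
    unfolding half_space_order_def using poset filt hs by blast
  have qa: "quasi_automorphic_action G X H \<phi>"
    unfolding quasi_automorphic_action_def
  proof (intro exI[of _ "\<lceil>2 * D / s\<rceil> + 2"] ballI)
    fix g S T assume g: "g \<in> carrier G" and S: "S \<in> X" and T: "T \<in> X"
    obtain a where a: "a \<in> carrier G" "S = {a}" using S by (auto simp: X_iff)
    obtain b where b: "b \<in> carrier G" "T = {b}" using T by (auto simp: X_iff)
    have inX: "{g \<otimes> a} \<in> X" "{g \<otimes> b} \<in> X" using g a b by (auto simp: X_iff)
    define u where "u = f (g \<otimes> a) / s"
    define v where "v = f (g \<otimes> b) / s"
    define u' where "u' = f a / s"
    define v' where "v' = f b / s"
    have hts: "height H (\<phi> g S) = \<lfloor>u\<rfloor>" "height H (\<phi> g T) = \<lfloor>v\<rfloor>" "height H S = \<lfloor>u'\<rfloor>" "height H T = \<lfloor>v'\<rfloor>"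
      using height_eq inX S T a b g by (simp_all add: phi_s F_s u_def v_def u'_def v'_def)
    have da: "\<bar>f (g \<otimes> a) - f g - f a\<bar> \<le> D" using D g a by simp
    have db: "\<bar>f (g \<otimes> b) - f g - f b\<bar> \<le> D" using D g b by simp
    have "\<bar>(f (g \<otimes> a) - f (g \<otimes> b)) - (f a - f b)\<bar> \<le> 2 * D" using da db by linarith
    then have "\<bar>((f (g \<otimes> a) - f (g \<otimes> b)) - (f a - f b)) / s\<bar> \<le> 2 * D / s"
      using s by (simp add: abs_divide divide_right_mono)
    then have uv: "\<bar>(u - v) - (u' - v')\<bar> \<le> 2 * D / s"
      unfolding u_def v_def u'_def v'_def by (simp add: diff_divide_distrib)
    have fl: "real_of_int \<lfloor>y\<rfloor> \<le> y" "y < real_of_int \<lfloor>y\<rfloor> + 1" for y :: real by linarith+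
    have c: "2 * D / s \<le> real_of_int \<lceil>2 * D / s\<rceil>" by (rule le_of_int_ceiling)
    have "\<bar>real_of_int ((\<lfloor>u\<rfloor> - \<lfloor>v\<rfloor>) - (\<lfloor>u'\<rfloor> - \<lfloor>v'\<rfloor>))\<bar> \<le> real_of_int (\<lceil>2 * D / s\<rceil> + 2)"
      using uv fl[of u] fl[of v] fl[of u'] fl[of v'] c by (simp add: abs_le_iff) linarith
    then have "\<bar>(\<lfloor>u\<rfloor> - \<lfloor>v\<rfloor>) - (\<lfloor>u'\<rfloor> - \<lfloor>v'\<rfloor>)\<bar> \<le> \<lceil>2 * D / s\<rceil> + 2"
      by (metis of_int_abs of_int_le_iff)
    then show "\<bar>(height H (\<phi> g S) - height H (\<phi> g T)) - (height H S - height H T)\<bar> \<le> \<lceil>2 * D / s\<rceil> + 2"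
      unfolding hts .
  qed
  have ub: "unbounded_action G X H \<phi>"
    unfolding unbounded_action_def
  proof (intro bexI conjI)
    have e: "(\<lambda>n::int. height H (\<phi> (x0 [^] n) {\<one>})) = (\<lambda>n. n)"
    proof
      fix n :: int
      have "\<phi> (x0 [^] n) {\<one>} = {x0 [^] n}" using x0 by (simp add: phi_s)
      moreover have "{x0 [^] n} \<in> X" using x0 by (simp add: X_iff)
      ultimately have "height H (\<phi> (x0 [^] n) {\<one>}) = \<lfloor>F {x0 [^] n} / s\<rfloor>" using height_eq by simp
      also have "\<dots> = n" using s fint x0 by (simp add: F_s s_def)
      finally show "height H (\<phi> (x0 [^] n) {\<one>}) = n" .
    qed
    show "filterlim (\<lambda>n::int. height H (\<phi> (x0 [^] n) {\<one>})) at_top at_top"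
      unfolding e by (rule filterlim_ident)
    show "filterlim (\<lambda>n::int. height H (\<phi> (x0 [^] n) {\<one>})) at_bot at_bot"
      unfolding e by (rule filterlim_ident)
    show "x0 \<in> carrier G" by (rule x0)
    show "{\<one>} \<in> X" by (simp add: X_iff)
  qed
  have qt: "quasi_total_via G leq X prec H \<phi>"
    unfolding quasi_total_via_def using hso fa qa ub unfolding leq_def by blast
  have OA: "leq g h" if g: "g \<in> carrier G" and h: "h \<in> carrier G" and le: "f h - f g \<ge> s + 4 * D" for g h
    unfolding leq_def induced_order_def
  proof (intro ballI)
    fix k S assume k: "k \<in> carrier G" and S: "S \<in> X"
    obtain a where a: "a \<in> carrier G" "S = {a}" using S by (auto simp: X_iff)
    have e1: "\<phi> (k \<otimes> g) S = {k \<otimes> g \<otimes> a}" using a k g by (simp add: phi_s)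
    have e2: "\<phi> (k \<otimes> h) S = {k \<otimes> h \<otimes> a}" using a k h by (simp add: phi_s)
    have A1: "\<bar>f (k \<otimes> g \<otimes> a) - f (k \<otimes> g) - f a\<bar> \<le> D" using D k g a by simp
    have A2: "\<bar>f (k \<otimes> g) - f k - f g\<bar> \<le> D" using D k g by simp
    have B1: "\<bar>f (k \<otimes> h \<otimes> a) - f (k \<otimes> h) - f a\<bar> \<le> D" using D k h a by simp
    have B2: "\<bar>f (k \<otimes> h) - f k - f h\<bar> \<le> D" using D k h by simp
    have "F {k \<otimes> h \<otimes> a} - F {k \<otimes> g \<otimes> a} \<ge> s"
      unfolding F_s using A1 A2 B1 B2 le by linarith
    then show "prec (\<phi> (k \<otimes> g) S) (\<phi> (k \<otimes> h) S)" unfolding e1 e2 prec_def by simp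
  qed
  have OB: "f g \<le> f h" if g: "g \<in> carrier G" and h: "h \<in> carrier G" and le: "leq g h" for g h
  proof -
    have "prec (\<phi> (\<one> \<otimes> g) {\<one>}) (\<phi> (\<one> \<otimes> h) {\<one>})"
      using le unfolding leq_def induced_order_def by (simp add: X_iff)
    then have "prec {g} {h}" using g h by (simp add: phi_s)
    then show ?thesis unfolding prec_def F_s using s by auto
  qed
  define N :: nat where "N = nat \<lceil>4 * D / s\<rceil> + 1"
  define g where "g = x0 [^] N"
  have g: "g \<in> carrier G" unfolding g_def using x0 by simp
  have fg: "f g = real N * s" unfolding g_def s_def using hm x0 by simp
  have fg_big: "f g \<ge> s + 4 * D"
  proof -
    have "4 * D / s \<le> real (nat \<lceil>4 * D / s\<rceil>)" by linarith
    then have "4 * D \<le> real (nat \<lceil>4 * D / s\<rceil>) * s" using s by (simp add: pos_divide_le_eq)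
    then show ?thesis unfolding fg N_def by (simp add: algebra_simps)
  qed
  have fgpos: "f g > 0" using fg_big s D0 by linarith
  have dom: "g \<in> dominants G leq"
  proof -
    have "leq \<one> g" using OA[OF one_closed g] fg_big f1 by simp
    moreover have "g \<noteq> \<one>" using fgpos f1 by auto
    moreover have "\<exists>n::nat. leq h (g [^] n)" if h: "h \<in> carrier G" for h
    proof -
      obtain n :: nat where n: "f h + s + 4 * D < real n * f g"
        using reals_Archimedean3[OF fgpos] by blast
      have "leq h (g [^] n)" using n hm[OF g, of n] by (intro OA[OF h nat_pow_closed[OF g, of n]]) linarith
      then show ?thesis by blast
    qed
    ultimately show ?thesis unfolding dominants_def order_semigroup_def using g by auto
  qed
  have gr: "growth G leq g h = f h / f g" if h: "h \<in> carrier G" for h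
  proof -
    have "growth_seq G leq g h \<longlonglongrightarrow> f h / f g"
      unfolding growth_seq_def
    proof (rule sandwich_lim[of "f g" _ "f h" 0 "s + 4 * D"])
      show "f g > 0" by (rule fgpos)
      fix n :: nat and p :: int
      {
        assume "leq (h [^] n) (g [^] p)"
        then have "f (h [^] n) \<le> f (g [^] p)" using OB g h by simp
        then show "real n * f h - 0 \<le> real_of_int p * f g" using hm fint g h by simp
      }
      {
        assume a: "real n * f h + (s + 4 * D) \<le> real_of_int p * f g"
        then have "f (g [^] p) - f (h [^] n) \<ge> s + 4 * D" using hm fint g h by simp
        then show "leq (h [^] n) (g [^] p)" using OA g h by simp
      }
    qed
    then show ?thesis unfolding growth_def by (rule limI)
  qed
  have "\<forall>h\<in>carrier G. f h = f g * growth G leq g h" using gr fgpos by simp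
  then show ?thesis using qt dom fgpos by blast
qed

theorem theorem1p3:
  fixes G :: "'a monoid"
  assumes "group G"
  shows
    "(\<forall>(leq :: 'a \<Rightarrow> 'a \<Rightarrow> bool) (X :: 'x set) prec H \<phi>.
        quasi_total_via G leq X prec H \<phi> \<longrightarrow>
          admissible G leq \<and>
          (\<forall>g\<in>dominants G leq.
             (\<forall>h\<in>carrier G. convergent (growth_seq G leq g h)) \<and>
             quasimorphism G (growth G leq g) \<and>
             homogeneous G (growth G leq g) \<and>
             (\<exists>h\<in>carrier G. growth G leq g h \<noteq> 0)))
     \<and>
     (\<forall>f :: 'a \<Rightarrow> real.
        quasimorphism G f \<and> homogeneous G f \<and> (\<exists>h\<in>carrier G. f h \<noteq> 0) \<longrightarrow>
          (\<exists>(leq :: 'a \<Rightarrow> 'a \<Rightarrow> bool) (X :: 'a set set) prec H \<phi> g c.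
              quasi_total_via G leq X prec H \<phi> \<and>
              g \<in> dominants G leq \<and> c > (0::real) \<and>
              (\<forall>h\<in>carrier G. f h = c * growth G leq g h)))"
  proof (rule conjI)
  show "\<forall>(leq :: 'a \<Rightarrow> 'a \<Rightarrow> bool) (X :: 'x set) prec H \<phi>.
        quasi_total_via G leq X prec H \<phi> \<longrightarrow>
          admissible G leq \<and>
          (\<forall>g\<in>dominants G leq.
             (\<forall>h\<in>carrier G. convergent (growth_seq G leq g h)) \<and>
             quasimorphism G (growth G leq g) \<and>
             homogeneous G (growth G leq g) \<and>
             (\<exists>h\<in>carrier G. growth G leq g h \<noteq> 0))"
    by (intro allI impI) (rule part1[OF assms])
  show "\<forall>f :: 'a \<Rightarrow> real.
        quasimorphism G f \<and> homogeneous G f \<and> (\<exists>h\<in>carrier G. f h \<noteq> 0) \<longrightarrow>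
          (\<exists>(leq :: 'a \<Rightarrow> 'a \<Rightarrow> bool) (X :: 'a set set) prec H \<phi> g c.
              quasi_total_via G leq X prec H \<phi> \<and>
              g \<in> dominants G leq \<and> c > (0::real) \<and>
              (\<forall>h\<in>carrier G. f h = c * growth G leq g h))"
  proof (intro allI impI)
    fix f :: "'a \<Rightarrow> real"
    assume "quasimorphism G f \<and> homogeneous G f \<and> (\<exists>h\<in>carrier G. f h \<noteq> 0)"
    then show "\<exists>(leq :: 'a \<Rightarrow> 'a \<Rightarrow> bool) (X :: 'a set set) prec H \<phi> g c.
              quasi_total_via G leq X prec H \<phi> \<and>
              g \<in> dominants G leq \<and> c > (0::real) \<and>
              (\<forall>h\<in>carrier G. f h = c * growth G leq g h)"
      using part2[OF assms] by blast
  qed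
qed

end
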